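(* Let $\gamma,\beta,\mu>0$ and, for $t\ge0$, $k\in\mathbb{R}^3$ with $\lambda_+(k)\neq\lambda_-(k)$, let $\mathcal N(t,k)$ be the $7\times7$ matrix \begin{equation*} \mathcal{N}=\begin{pmatrix} \frac{\lambda_+e^{\lambda_- t}-\lambda_-e^{\lambda_+ t}}{\lambda_+-\lambda_-} & -i\gamma{k}^T \frac{e^{\lambda_+ t}-e^{\lambda_- t}}{\lambda_+-\lambda_-} & 0 \\[2mm] -i\gamma k\frac{e^{\lambda_+ t}-e^{\lambda_- t}}{\lambda_+-\lambda_-} & \frac{\lambda_+e^{\lambda_+ t}-\lambda_-e^{\lambda_- t}}{\lambda_+-\lambda_-}\mathbf{I}_3 & -\beta\frac{e^{\lambda_+ t}-e^{\lambda_- t}}{\lambda_+-\lambda_-}\mathbf{I}_3\\[2mm] 0 & \beta\frac{e^{\lambda_+ t}-e^{\lambda_- t}}{\lambda_+-\lambda_-}\mathbf{I}_3 & \frac{\lambda_+e^{\lambda_- t}-\lambda_-e^{\lambda_+ t}}{\lambda_+-\lambda_-}\mathbf{I}_3 \end{pmatrix},\quad \lambda_\pm=-\tfrac{1}{2}\mu |k|^2\pm \tfrac{1}{2} \sqrt{\mu^2 |k|^4-4(\gamma^2|k|^2+\beta^2)}. \end{equation*} Then there exist constants $0<\epsilon<L$ such that, with $\mathbb{D}_0=\{|k|\le\epsilon\}$, $\mathbb{D}_1=\{\epsilon\le|k|\le L\}$, $\mathbb{D}_\infty=\{|k|\ge L\}$, the following entrywise bounds hold for $t\ge0$ and $k$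 (where $\mathcal N$ is defined). Over $\mathbb{D}_0$, \begin{equation*} |\mathcal{N}| \lesssim \begin{pmatrix} 1 & |k|d_3^T & 0 \\ |k|d_3 & \mathbf{I}_3 &\mathbf{I}_3 \\ 0 & \mathbf{I}_3 & \mathbf{I}_3 \end{pmatrix} e^{-\frac{1}{2}\mu |k|^2 t}. \end{equation*} Over $\mathbb{D}_\infty$, \begin{equation*} |\mathcal{N}| \lesssim \begin{pmatrix} 1 & |k|^{-1}d_3^T & 0 \\ |k|^{-1}d_3 & |k|^{-2}\mathbf{I}_3 & |k|^{-2}\mathbf{I}_3 \\ 0 & |k|^{-2}\mathbf{I}_3 & \mathbf{I}_3 \end{pmatrix} e^{-O(1) t} + \begin{pmatrix} |k|^{-2} & |k|^{-1}d_3^T & 0 \\ |k|^{-1}d_3 & \mathbf{I}_3 & |k|^{-2}\mathbf{I}_3 \\ 0 & |k|^{-2}\mathbf{I}_3 & |k|^{-2}\mathbf{I}_3 \end{pmatrix} e^{-O(1) |k|^2 t}. \end{equation*} Over $\mathbb{D}_1$, \begin{equation*} |\mathcal{N}| \lesssim \begin{pmatrix} 1 & d_3^T & 0 \\ d_3 & \mathbf{I}_3 & \mathbf{I}_3 \\ 0 & \mathbf{I}_3 & \mathbf{I}_3 \end{pmatrix} e^{-O(1) t}. \end{equation*}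
   Context: $|\mathcal N|$ denotes the matrix whose entries are the absolute values of those of $\mathcal N$; the inequalities are entrywise up to a constant. $d_3=(1,1,1)^T$; $\mathbf I_3$ is the $3\times3$ identity. $O(1)$ denotes a generic strictly positive constant independent of $t,k$; $A\lesssim B$ means $A\le CB$ for a constant $C$ independent of $t,k$. *)

theory Defs
  imports "HOL-Analysis.Analysis"
begin

text \<open>Eigenvalues lambda_plus / lambda_minus (complex; csqrt is the principal square root).
  All entries of N are symmetric under swapping the two, so the branch choice is irrelevant.\<close>

definition lam_p :: "real \<Rightarrow> real \<Rightarrow> real \<Rightarrow> real^3 \<Rightarrow> complex" where
  "lam_p \<gamma> \<beta> \<mu> k = complex_of_real (- \<mu> * norm k ^ 2 / 2)
     + csqrt (complex_of_real (\<mu>^2 * norm k ^ 4 - 4 * (\<gamma>^2 * norm k ^ 2 + \<beta>^2))) / 2"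

definition lam_m :: "real \<Rightarrow> real \<Rightarrow> real \<Rightarrow> real^3 \<Rightarrow> complex" where
  "lam_m \<gamma> \<beta> \<mu> k = complex_of_real (- \<mu> * norm k ^ 2 / 2)
     - csqrt (complex_of_real (\<mu>^2 * norm k ^ 4 - 4 * (\<gamma>^2 * norm k ^ 2 + \<beta>^2))) / 2"

definition kc :: "real^3 \<Rightarrow> nat \<Rightarrow> real" where
  "kc k i = k $ (if i = 1 then 1 else if i = 2 then 2 else 3)"

text \<open>The 7x7 matrix N(t,k), indices 0..6: index 0 is the scalar block,
  1..3 the middle block, 4..6 the last block.\<close>
definition Nmat :: "real \<Rightarrow> real \<Rightarrow> real \<Rightarrow> real \<Rightarrow> real^3 \<Rightarrow> nat \<Rightarrow> nat \<Rightarrow> complex" where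
  "Nmat \<gamma> \<beta> \<mu> t k i j =
    (let lp = lam_p \<gamma> \<beta> \<mu> k; lm = lam_m \<gamma> \<beta> \<mu> k; tc = complex_of_real t;
         A = (lp * exp (lm * tc) - lm * exp (lp * tc)) / (lp - lm);
         B = (exp (lp * tc) - exp (lm * tc)) / (lp - lm);
         D = (lp * exp (lp * tc) - lm * exp (lm * tc)) / (lp - lm)
     in if i = 0 \<and> j = 0 then A
        else if i = 0 \<and> 1 \<le> j \<and> j \<le> 3 then - \<i> * complex_of_real (\<gamma> * kc k j) * B
        else if j = 0 \<and> 1 \<le> i \<and> i \<le> 3 then - \<i> * complex_of_real (\<gamma> * kc k i) * B
        else if 1 \<le> i \<and> i \<le> 3 \<and> 1 \<le> j \<and> j \<le> 3 then (if i = j then D else 0)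
        else if 1 \<le> i \<and> i \<le> 3 \<and> 4 \<le> j \<and> j \<le> 6 then
               (if j = i + 3 then - complex_of_real \<beta> * B else 0)
        else if 4 \<le> i \<and> i \<le> 6 \<and> 1 \<le> j \<and> j \<le> 3 then
               (if i = j + 3 then complex_of_real \<beta> * B else 0)
        else if 4 \<le> i \<and> i \<le> 6 \<and> 4 \<le> j \<and> j \<le> 6 then (if i = j then A else 0)
        else 0)"

text \<open>Block bound pattern
  [[x00, x01 d3^T, 0], [x01 d3, x11 I3, x12 I3], [0, x12 I3, x22 I3]] with indices 0..6.\<close>
definition bpat :: "real \<Rightarrow> real \<Rightarrow> real \<Rightarrow> real \<Rightarrow> real \<Rightarrow> nat \<Rightarrow> nat \<Rightarrow> real" where
  "bpat x00 x01 x11 x12 x22 i j =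
     (if i = 0 \<and> j = 0 then x00
      else if i = 0 \<and> 1 \<le> j \<and> j \<le> 3 then x01
      else if j = 0 \<and> 1 \<le> i \<and> i \<le> 3 then x01
      else if 1 \<le> i \<and> i \<le> 3 \<and> 1 \<le> j \<and> j \<le> 3 then (if i = j then x11 else 0)
      else if 1 \<le> i \<and> i \<le> 3 \<and> 4 \<le> j \<and> j \<le> 6 then (if j = i + 3 then x12 else 0)
      else if 4 \<le> i \<and> i \<le> 6 \<and> 1 \<le> j \<and> j \<le> 3 then (if i = j + 3 then x12 else 0)
      else if 4 \<le> i \<and> i \<le> 6 \<and> 4 \<le> j \<and> j \<le> 6 then (if i = j then x22 else 0)
      else 0)"

end

theory Submission
  imports Defs
begin

definition Aq :: "complex \<Rightarrow> complex \<Rightarrow> real \<Rightarrow> complex" where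
  "Aq lp lm t = (lp * exp (lm * complex_of_real t) - lm * exp (lp * complex_of_real t)) / (lp - lm)"
definition Bq :: "complex \<Rightarrow> complex \<Rightarrow> real \<Rightarrow> complex" where
  "Bq lp lm t = (exp (lp * complex_of_real t) - exp (lm * complex_of_real t)) / (lp - lm)"
definition Dq :: "complex \<Rightarrow> complex \<Rightarrow> real \<Rightarrow> complex" where
  "Dq lp lm t = (lp * exp (lp * complex_of_real t) - lm * exp (lm * complex_of_real t)) / (lp - lm)"

lemma kc_le: "\<bar>kc k i\<bar> \<le> norm k"
  unfolding kc_def by (rule component_le_norm_cart)

lemma Nmat_alt: "Nmat \<gamma> \<beta> \<mu> t k i j =
    (let A = Aq (lam_p \<gamma> \<beta> \<mu> k) (lam_m \<gamma> \<beta> \<mu> k) t;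
         B = Bq (lam_p \<gamma> \<beta> \<mu> k) (lam_m \<gamma> \<beta> \<mu> k) t;
         D = Dq (lam_p \<gamma> \<beta> \<mu> k) (lam_m \<gamma> \<beta> \<mu> k) t
     in if i = 0 \<and> j = 0 then A
        else if i = 0 \<and> 1 \<le> j \<and> j \<le> 3 then - \<i> * complex_of_real (\<gamma> * kc k j) * B
        else if j = 0 \<and> 1 \<le> i \<and> i \<le> 3 then - \<i> * complex_of_real (\<gamma> * kc k i) * B
        else if 1 \<le> i \<and> i \<le> 3 \<and> 1 \<le> j \<and> j \<le> 3 then (if i = j then D else 0)
        else if 1 \<le> i \<and> i \<le> 3 \<and> 4 \<le> j \<and> j \<le> 6 then
               (if j = i + 3 then - complex_of_real \<beta> * B else 0)
        else if 4 \<le> i \<and> i \<le> 6 \<and> 1 \<le> j \<and> j \<le> 3 then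
               (if i = j + 3 then complex_of_real \<beta> * B else 0)
        else if 4 \<le> i \<and> i \<le> 6 \<and> 4 \<le> j \<and> j \<le> 6 then (if i = j then A else 0)
        else 0)"
  by (simp only: Nmat_def Let_def Aq_def Bq_def Dq_def)

lemma nmat_bound:
  assumes g: "\<gamma> > 0" and b: "\<beta> > 0" and i7: "i < 7" and j7: "j < 7"
  and h00: "cmod (Aq (lam_p \<gamma> \<beta> \<mu> k) (lam_m \<gamma> \<beta> \<mu> k) t) \<le> X00"
  and h22: "cmod (Aq (lam_p \<gamma> \<beta> \<mu> k) (lam_m \<gamma> \<beta> \<mu> k) t) \<le> X22"
  and h01: "\<gamma> * norm k * cmod (Bq (lam_p \<gamma> \<beta> \<mu> k) (lam_m \<gamma> \<beta> \<mu> k) t) \<le> X01"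
  and h11: "cmod (Dq (lam_p \<gamma> \<beta> \<mu> k) (lam_m \<gamma> \<beta> \<mu> k) t) \<le> X11"
  and h12: "\<beta> * cmod (Bq (lam_p \<gamma> \<beta> \<mu> k) (lam_m \<gamma> \<beta> \<mu> k) t) \<le> X12"
  shows "cmod (Nmat \<gamma> \<beta> \<mu> t k i j) \<le> bpat X00 X01 X11 X12 X22 i j"
proof -
  let ?B = "Bq (lam_p \<gamma> \<beta> \<mu> k) (lam_m \<gamma> \<beta> \<mu> k) t"
  have e: "cmod (- \<i> * complex_of_real (\<gamma> * kc k i') * ?B) \<le> X01" for i'
  proof -
    have "cmod (- \<i> * complex_of_real (\<gamma> * kc k i') * ?B) = \<gamma> * \<bar>kc k i'\<bar> * cmod ?B"
      using g by (simp add: norm_mult abs_mult)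
    also have "\<dots> \<le> \<gamma> * norm k * cmod ?B"
      using g kc_le[of k i'] by (intro mult_right_mono mult_left_mono) auto
    finally show ?thesis using h01 by linarith
  qed
  have f: "cmod (- complex_of_real \<beta> * ?B) \<le> X12" "cmod (complex_of_real \<beta> * ?B) \<le> X12"
    using h12 b by (simp_all add: norm_mult)
  have hi: "i = 0 \<or> i = 1 \<or> i = 2 \<or> i = 3 \<or> i = 4 \<or> i = 5 \<or> i = 6" using i7 by linarith
  have hj: "j = 0 \<or> j = 1 \<or> j = 2 \<or> j = 3 \<or> j = 4 \<or> j = 5 \<or> j = 6" using j7 by linarith
  from hi hj show ?thesis
    apply (elim disjE)
    apply (simp_all only: Nmat_alt bpat_def Let_def)
    apply (simp_all add: h00 h22 h11 e[simplified] f[simplified])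
    done
qed


lemma bpat_mono:
  assumes "x00 \<le> y00" "x01 \<le> y01" "x11 \<le> y11" "x12 \<le> y12" "x22 \<le> y22"
  shows "bpat x00 x01 x11 x12 x22 i j \<le> bpat y00 y01 y11 y12 y22 i j"
  using assms unfolding bpat_def by auto

lemma bpat_lin1:
  "C * bpat x00 x01 x11 x12 x22 i j * E = bpat (C*x00*E) (C*x01*E) (C*x11*E) (C*x12*E) (C*x22*E) i j"
  unfolding bpat_def by auto

lemma bpat_lin2:
  "C * (bpat x00 x01 x11 x12 x22 i j * E + bpat y00 y01 y11 y12 y22 i j * F) =
   bpat (C*(x00*E+y00*F)) (C*(x01*E+y01*F)) (C*(x11*E+y11*F)) (C*(x12*E+y12*F)) (C*(x22*E+y22*F)) i j"
  unfolding bpat_def by auto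

lemma tri_bound:
  fixes x y e1 e2 w :: complex
  assumes "0 < w0" "w0 \<le> cmod w" "cmod x \<le> X" "cmod y \<le> Y" "cmod e1 \<le> E1" "cmod e2 \<le> E2"
  shows "cmod ((x*e1 - y*e2)/w) \<le> (X*E1 + Y*E2)/w0"
proof -
  have "cmod ((x*e1 - y*e2)/w) = cmod (x*e1 - y*e2) / cmod w" by (simp add: norm_divide)
  also have "\<dots> \<le> (cmod x * cmod e1 + cmod y * cmod e2) / cmod w"
    by (intro divide_right_mono) (auto intro: order_trans[OF norm_triangle_ineq4] simp: norm_mult)
  also have "\<dots> \<le> (X*E1 + Y*E2) / cmod w"
  proof -
    have "0 \<le> X" "0 \<le> Y" using assms(3,4) norm_ge_zero[of x] norm_ge_zero[of y] by linarith+
    then show ?thesis by (intro divide_right_mono add_mono mult_mono) (use assms in auto)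
  qed
  also have "\<dots> \<le> (X*E1 + Y*E2) / w0"
  proof (rule divide_left_mono)
    show "0 \<le> X*E1 + Y*E2"
      using assms by (intro add_nonneg_nonneg mult_nonneg_nonneg) (auto intro: order_trans[OF norm_ge_zero])
  qed (use assms in \<open>auto intro!: mult_pos_pos\<close>)
  finally show ?thesis .
qed

lemma tri_bound2:
  fixes e1 e2 w :: complex
  assumes "0 < w0" "w0 \<le> cmod w" "cmod e1 \<le> E1" "cmod e2 \<le> E2"
  shows "cmod ((e1 - e2)/w) \<le> (E1 + E2)/w0"
  using tri_bound[OF assms(1,2), of 1 1 1 1 e1 E1 e2 E2] assms by simp

lemma quad_norm:
  fixes z b c :: complex
  assumes "z^2 + b*z + c = 0"
  shows "cmod z \<le> 1 + cmod b + cmod c"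
proof (cases "cmod z \<le> 1")
  case True then show ?thesis by (smt (verit) norm_ge_zero)
next
  case False
  have "z*z = - (b*z + c)" using assms by (simp add: power2_eq_square algebra_simps add_eq_0_iff)
  then have "cmod (z*z) = cmod (b*z + c)" by (metis norm_minus_cancel)
  then have "cmod z * cmod z = cmod (b*z + c)" by (simp add: norm_mult)
  also have "\<dots> \<le> cmod b * cmod z + cmod c" by (metis norm_mult norm_triangle_ineq add_mono order_refl order_trans)
  also have "\<dots> \<le> (cmod b + cmod c) * cmod z" using False mult_left_mono[of 1 "cmod z" "cmod c"] by (simp add: algebra_simps)
  finally have "cmod z \<le> cmod b + cmod c" using False by (simp add: mult_le_cancel_right) (metis norm_zero zero_le_one)
  then show ?thesis by simp
qed

lemma lam_diff: "lam_p g b u k - lam_m g b u k = csqrt (of_real (u^2 * norm k^4 - 4*(g^2*norm k^2 + b^2)))"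
  by (simp add: lam_p_def lam_m_def)

lemma lam_quad:
  "(lam_p g b u k)^2 + of_real (u*norm k^2) * lam_p g b u k + of_real (g^2*norm k^2+b^2) = 0"
  "(lam_m g b u k)^2 + of_real (u*norm k^2) * lam_m g b u k + of_real (g^2*norm k^2+b^2) = 0"
proof -
  define w where "w = csqrt (of_real (u^2 * norm k^4 - 4*(g^2*norm k^2 + b^2)))"
  have w2: "w*w = of_real (u^2 * norm k^4 - 4*(g^2*norm k^2 + b^2))"
    unfolding w_def by (metis power2_csqrt power2_eq_square)
  have p: "lam_p g b u k = of_real (- u * norm k ^ 2 / 2) + w/2" by (simp add: lam_p_def w_def)
  have m: "lam_m g b u k = of_real (- u * norm k ^ 2 / 2) - w/2" by (simp add: lam_m_def w_def)
  show "(lam_p g b u k)^2 + of_real (u*norm k^2) * lam_p g b u k + of_real (g^2*norm k^2+b^2) = 0"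
    unfolding p by (simp add: power2_eq_square algebra_simps w2 field_simps eval_nat_numeral)
  show "(lam_m g b u k)^2 + of_real (u*norm k^2) * lam_m g b u k + of_real (g^2*norm k^2+b^2) = 0"
    unfolding m by (simp add: power2_eq_square algebra_simps w2 field_simps eval_nat_numeral)
qed


lemma lam_neg:
  assumes "u^2 * norm k^4 - 4*(g^2*norm k^2 + b^2) < 0"
  shows "Re (lam_p g b u k) = - u*norm k^2/2" "Re (lam_m g b u k) = - u*norm k^2/2"
    "cmod (lam_p g b u k - lam_m g b u k) = sqrt (- (u^2 * norm k^4 - 4*(g^2*norm k^2 + b^2)))"
  using assms by (simp_all add: lam_p_def lam_m_def norm_mult)

lemma lam_pos:
  assumes "0 \<le> u^2 * norm k^4 - 4*(g^2*norm k^2 + b^2)"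
  shows "lam_p g b u k = of_real (- u*norm k^2/2 + sqrt (u^2 * norm k^4 - 4*(g^2*norm k^2 + b^2))/2)"
    "lam_m g b u k = of_real (- u*norm k^2/2 - sqrt (u^2 * norm k^4 - 4*(g^2*norm k^2 + b^2))/2)"
  using assms by (simp_all add: lam_p_def lam_m_def csqrt_of_real)

lemma root_facts:
  fixes a q r :: real
  assumes a: "a > 0" and q: "q \<ge> 0" and r: "r \<ge> 0" and rr: "r^2 = 4*a^2 - 4*q"
  shows "r \<le> 2*a" "q \<le> (a - r/2) * (2*a)" "a - r/2 \<le> q/a" "0 \<le> a - r/2"
proof -
  have prod: "(a - r/2)*(a + r/2) = q" using rr by (simp add: algebra_simps power2_eq_square)
  have e4: "(2*a)^2 = 4*a^2" by (simp add: power2_eq_square algebra_simps)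
  have "r^2 \<le> (2*a)^2" using rr q e4 by linarith
  from power2_le_imp_le[OF this] a show r2: "r \<le> 2*a" by linarith
  then show nn: "0 \<le> a - r/2" by linarith
  have "(a - r/2) * (a + r/2) \<le> (a - r/2) * (2*a)"
    by (rule mult_left_mono) (use r2 nn in linarith)+
  then show "q \<le> (a - r/2) * (2*a)" using prod by linarith
  have "(a - r/2) * a \<le> (a - r/2) * (a + r/2)" by (rule mult_left_mono) (use r nn in linarith)+
  then have "(a - r/2) * a \<le> q" using prod by linarith
  then show "a - r/2 \<le> q/a" using a by (simp add: field_simps)
qed

lemma exp_cmod: "cmod (exp (z * complex_of_real t)) = exp (Re z * t)"
  by simp

lemma small_region:
  assumes g: "g > 0" and b: "b > 0" and u: "u > 0" and t: "t \<ge> 0"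
    and s1: "norm k \<le> 1" and sb: "u * norm k \<le> b"
  defines "E \<equiv> exp (- (1/2) * u * norm k ^ 2 * t)" and "M \<equiv> 1 + u + g^2 + b^2"
  shows "cmod (Bq (lam_p g b u k) (lam_m g b u k) t) \<le> 2/b * E"
    "cmod (Aq (lam_p g b u k) (lam_m g b u k) t) \<le> 2*M/b * E"
    "cmod (Dq (lam_p g b u k) (lam_m g b u k) t) \<le> 2*M/b * E"
proof -
  define s where "s = norm k"
  define d where "d = u^2 * norm k^4 - 4*(g^2*norm k^2 + b^2)"
  have s0: "0 \<le> s" by (simp add: s_def)
  have ss: "s^2 \<le> 1" using s1 s0 unfolding s_def by (simp add: power_le_one)
  have "s^2 * s^2 \<le> s^2 * 1" by (rule mult_left_mono[OF ss]) simp
  moreover have "s^4 = s^2 * s^2" by (simp add: power4_eq_xxxx power2_eq_square algebra_simps)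
  ultimately have "s^4 \<le> s^2" by linarith
  then have us1: "u^2 * s^4 \<le> u^2 * s^2" by (rule mult_left_mono) simp
  have us2: "u^2 * s^2 = (u * s)^2" by (simp add: power_mult_distrib)
  have us3: "(u * s)^2 \<le> b^2" using sb s0 u unfolding s_def by (intro power_mono) auto
  have us: "u^2 * s^4 \<le> b^2" using us1 us2 us3 by linarith
  have gs: "0 \<le> g^2 * s^2" by simp
  have d_eq: "d = u^2 * s^4 - 4 * (g^2 * s^2) - 4 * b^2" by (simp add: d_def s_def algebra_simps)
  have b2: "0 < b^2" using b by simp
  have dneg: "d < 0" using d_eq us gs b2 by linarith
  have dd: "b^2 \<le> - d" using d_eq us gs b2 by linarith
  have sq: "b \<le> sqrt (-d)" using dd by (rule real_le_rsqrt)
  have w: "b \<le> cmod (lam_p g b u k - lam_m g b u k)" using lam_neg(3)[OF dneg[unfolded d_def]] sq by (simp add: d_def)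
  have ep: "cmod (exp (lam_p g b u k * complex_of_real t)) \<le> E"
    using lam_neg(1)[OF dneg[unfolded d_def]] by (simp add: E_def algebra_simps)
  have em: "cmod (exp (lam_m g b u k * complex_of_real t)) \<le> E"
    using lam_neg(2)[OF dneg[unfolded d_def]] by (simp add: E_def algebra_simps)
  have "cmod (complex_of_real (u*norm k^2)) = \<bar>u * norm k^2\<bar>" by (rule norm_of_real)
  also have "\<dots> = u * s^2" using u by (simp add: s_def)
  also have "\<dots> \<le> u * 1" using u ss by (intro mult_left_mono) auto
  finally have cu: "cmod (complex_of_real (u*norm k^2)) \<le> u" by simp
  have "cmod (complex_of_real (g^2*norm k^2 + b^2)) = \<bar>g^2*norm k^2 + b^2\<bar>" by (rule norm_of_real)
  also have "\<dots> = g^2 * s^2 + b^2" by (simp add: s_def)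
  also have "\<dots> \<le> g^2 * 1 + b^2" using ss by (intro add_mono mult_left_mono) auto
  finally have cq: "cmod (complex_of_real (g^2*norm k^2 + b^2)) \<le> g^2 + b^2" by simp
  have lp: "cmod (lam_p g b u k) \<le> M"
    using quad_norm[OF lam_quad(1)[of g b u k]] cu cq unfolding M_def by linarith
  have lm: "cmod (lam_m g b u k) \<le> M"
    using quad_norm[OF lam_quad(2)[of g b u k]] cu cq unfolding M_def by linarith
  have e1: "(E + E)/b = 2/b * E" "(M*E + M*E)/b = 2*M/b*E" by (simp_all add: field_simps)
  show "cmod (Bq (lam_p g b u k) (lam_m g b u k) t) \<le> 2/b * E"
    using tri_bound2[OF b w ep em] unfolding Bq_def e1 .
  show "cmod (Aq (lam_p g b u k) (lam_m g b u k) t) \<le> 2*M/b * E"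
    using tri_bound[OF b w lp lm em ep] unfolding Aq_def e1 .
  show "cmod (Dq (lam_p g b u k) (lam_m g b u k) t) \<le> 2*M/b * E"
    using tri_bound[OF b w lp lm ep em] unfolding Dq_def e1 .
qed


lemma mvt_exp:
  assumes x: "Re x \<le> -m" and y: "Re y \<le> -m" and t: "t \<ge> 0"
  shows "cmod (exp (x * complex_of_real t) - exp (y * complex_of_real t)) \<le> t * exp (-m*t) * cmod (x - y)"
proof -
  let ?S = "{z. Re z \<le> -m}"
  have "norm ((\<lambda>z. exp (z * complex_of_real t)) x - (\<lambda>z. exp (z * complex_of_real t)) y) \<le> (t * exp (-m*t)) * norm (x - y)"
  proof (rule field_differentiable_bound[where f' = "\<lambda>z. exp (z * complex_of_real t) * complex_of_real t"])
    show "convex ?S" by (rule convex_halfspace_Re_le)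
    show "((\<lambda>z. exp (z * complex_of_real t)) has_field_derivative exp (z * complex_of_real t) * complex_of_real t) (at z within ?S)" for z
      by (auto intro!: derivative_eq_intros)
    show "norm (exp (z * complex_of_real t) * complex_of_real t) \<le> t * exp (-m*t)" if "z \<in> ?S" for z
    proof -
      have "Re z * t \<le> -m * t" using that t by (intro mult_right_mono) auto
      then have "exp (Re z * t) \<le> exp (-m*t)" by simp
      then show ?thesis using t by (simp add: norm_mult mult.commute mult_left_mono)
    qed
  qed (use x y in auto)
  then show ?thesis by simp
qed

lemma texp:
  fixes m t :: real
  assumes m: "m > 0" and t: "t \<ge> 0"
  shows "t * exp (-m*t) \<le> 2/m * exp (-(m/2)*t)"
proof -
  have h: "m*t/2 \<le> exp (m*t/2)" using exp_ge_add_one_self[of "m*t/2"] by linarith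
  have one: "exp (m*t/2) * exp (-(m/2)*t) = 1"
  proof -
    have "exp (m*t/2) * exp (-(m/2)*t) = exp (m*t/2 + (-(m/2)*t))" by (rule exp_add[symmetric])
    also have "m*t/2 + (-(m/2)*t) = 0" by simp
    finally show ?thesis by simp
  qed
  have "t * exp (-(m/2)*t) = (2/m) * ((m*t/2) * exp (-(m/2)*t))" using m by (simp add: field_simps)
  also have "\<dots> \<le> (2/m) * (exp (m*t/2) * exp (-(m/2)*t))"
    using m h by (intro mult_left_mono mult_right_mono) auto
  also have "\<dots> = 2/m" using one by simp
  finally have X: "t * exp (-(m/2)*t) \<le> 2/m" .
  have sp: "exp (-m*t) = exp (-(m/2)*t) * exp (-(m/2)*t)"
  proof -
    have "exp (-(m/2)*t) * exp (-(m/2)*t) = exp (-(m/2)*t + -(m/2)*t)" by (rule exp_add[symmetric])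
    also have "-(m/2)*t + -(m/2)*t = -m*t" by simp
    finally show ?thesis by simp
  qed
  have "t * exp (-m*t) = (t * exp (-(m/2)*t)) * exp (-(m/2)*t)" unfolding sp by (simp add: mult.assoc)
  also have "\<dots> \<le> 2/m * exp (-(m/2)*t)" using X by (intro mult_right_mono) auto
  finally show ?thesis .
qed

lemma re_bound:
  assumes g: "g > 0" and b: "b > 0" and u: "u > 0" and s: "norm k > 0"
  shows "Re (lam_p g b u k) \<le> - min (u*norm k^2/2) (g^2/u)"
    "Re (lam_m g b u k) \<le> - min (u*norm k^2/2) (g^2/u)"
proof -
  have mn: "min (u*norm k^2/2) (g^2/u) \<le> u*norm k^2/2" "min (u*norm k^2/2) (g^2/u) \<le> g^2/u"
    by (rule min.cobounded1, rule min.cobounded2)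
  have conj: "Re (lam_p g b u k) \<le> - min (u*norm k^2/2) (g^2/u) \<and> Re (lam_m g b u k) \<le> - min (u*norm k^2/2) (g^2/u)"
  proof (cases "u^2*norm k^4 - 4*(g^2*norm k^2+b^2) < 0")
    case True
    then show ?thesis using lam_neg(1,2)[OF True] mn by simp
  next
    case False
    define d where "d = u^2*norm k^4 - 4*(g^2*norm k^2+b^2)"
    define a where "a = u*norm k^2/2"
    define q where "q = g^2*norm k^2+b^2"
    define r where "r = sqrt d"
    have d0: "0 \<le> d" using False by (simp add: d_def)
    have a0: "a > 0" using u s by (simp add: a_def)
    have q0: "q \<ge> 0" by (simp add: q_def)
    have r0: "r \<ge> 0" using d0 by (simp add: r_def)
    have r2: "r^2 = d" using d0 by (simp add: r_def)
    have "d = 4*a^2 - 4*q" by (simp add: d_def a_def q_def power_mult_distrib field_simps eval_nat_numeral)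
    with r2 have rr: "r^2 = 4*a^2 - 4*q" by simp
    have F: "q \<le> (a - r/2) * (2*a)" using root_facts(2)[OF a0 q0 r0 rr] .
    have "(g^2/u) * (2*a) = g^2 * norm k^2" using u by (simp add: a_def field_simps)
    also have "\<dots> \<le> q" by (simp add: q_def)
    finally have "(g^2/u) * (2*a) \<le> (a - r/2) * (2*a)" using F by linarith
    then have G: "g^2/u \<le> a - r/2" by (rule mult_right_le_imp_le) (use a0 in simp)
    have P: "Re (lam_p g b u k) = -a + r/2" "Re (lam_m g b u k) = -a - r/2"
      using lam_pos[of u k g b] False by (simp_all add: a_def r_def d_def)
    show ?thesis using P G mn r0 by linarith
  qed
  then show "Re (lam_p g b u k) \<le> - min (u*norm k^2/2) (g^2/u)"
    "Re (lam_m g b u k) \<le> - min (u*norm k^2/2) (g^2/u)" by simp_all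
qed


lemma A_alt: "lp \<noteq> lm \<Longrightarrow> Aq lp lm t = exp (lm * complex_of_real t) - lm * Bq lp lm t"
  unfolding Aq_def Bq_def by (simp add: field_simps)

lemma D_alt: "lp \<noteq> lm \<Longrightarrow> Dq lp lm t = exp (lp * complex_of_real t) + lm * Bq lp lm t"
  unfolding Dq_def Bq_def by (simp add: field_simps)

lemma middle_region:
  assumes g: "g > 0" and b: "b > 0" and u: "u > 0" and t: "t \<ge> 0"
    and ne: "lam_p g b u k \<noteq> lam_m g b u k" and e0: "0 < \<epsilon>" and e1: "\<epsilon> \<le> norm k" and L: "norm k \<le> L"
    and m_def: "m = min (u*\<epsilon>^2/2) (g^2/u)"
  defines "E \<equiv> exp (-(m/2)*t)"
    and "M \<equiv> 1 + u*L^2 + g^2*L^2 + b^2"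
  shows "cmod (Bq (lam_p g b u k) (lam_m g b u k) t) \<le> 2/m * E"
    "cmod (Aq (lam_p g b u k) (lam_m g b u k) t) \<le> (1 + M*(2/m)) * E"
    "cmod (Dq (lam_p g b u k) (lam_m g b u k) t) \<le> (1 + M*(2/m)) * E"
proof -
  let ?lp = "lam_p g b u k" and ?lm = "lam_m g b u k"
  have m0: "m > 0" using u g e0 by (simp add: m_def)
  have s0: "norm k > 0" using e0 e1 by linarith
  have es: "\<epsilon>^2 \<le> norm k^2" using e0 e1 by (intro power_mono) auto
  have "m \<le> min (u*norm k^2/2) (g^2/u)" unfolding m_def
    by (rule min.mono) (use es u in auto)
  then have rp: "Re ?lp \<le> -m" and rm: "Re ?lm \<le> -m" using re_bound[OF g b u s0] by linarith+
  have ee: "exp (-m*t) \<le> E" unfolding E_def using m0 t by (simp add: mult_right_mono)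
  have xp: "cmod (exp (?lp * complex_of_real t)) \<le> E"
  proof -
    have "Re ?lp * t \<le> -m * t" using rp t by (rule mult_right_mono)
    then have "exp (Re ?lp * t) \<le> exp (-m*t)" by (simp only: exp_le_cancel_iff)
    then show ?thesis unfolding exp_cmod using ee by linarith
  qed
  have xm: "cmod (exp (?lm * complex_of_real t)) \<le> E"
  proof -
    have "Re ?lm * t \<le> -m * t" using rm t by (rule mult_right_mono)
    then have "exp (Re ?lm * t) \<le> exp (-m*t)" by (simp only: exp_le_cancel_iff)
    then show ?thesis unfolding exp_cmod using ee by linarith
  qed
  have dpos: "cmod (?lp - ?lm) > 0" using ne by simp
  have "cmod (Bq ?lp ?lm t) = cmod (exp (?lp * complex_of_real t) - exp (?lm * complex_of_real t)) / cmod (?lp - ?lm)"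
    unfolding Bq_def by (simp add: norm_divide)
  also have "\<dots> \<le> t * exp (-m*t)"
    using mvt_exp[OF rp rm t] dpos by (simp add: pos_divide_le_eq)
  also have "\<dots> \<le> 2/m * E" unfolding E_def by (rule texp[OF m0 t])
  finally show hB: "cmod (Bq ?lp ?lm t) \<le> 2/m * E" .
  have s2: "norm k^2 \<le> L^2" using L by (intro power_mono) auto
  have "cmod (complex_of_real (u*norm k^2)) = \<bar>u * norm k^2\<bar>" by (rule norm_of_real)
  also have "\<dots> = u * norm k^2" using u by simp
  also have "\<dots> \<le> u * L^2" using u s2 by (intro mult_left_mono) auto
  finally have cu: "cmod (complex_of_real (u*norm k^2)) \<le> u * L^2" .
  have "cmod (complex_of_real (g^2*norm k^2 + b^2)) = \<bar>g^2*norm k^2 + b^2\<bar>" by (rule norm_of_real)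
  also have "\<dots> = g^2 * norm k^2 + b^2" by simp
  also have "\<dots> \<le> g^2 * L^2 + b^2" using s2 by (intro add_mono mult_left_mono) auto
  finally have cq: "cmod (complex_of_real (g^2*norm k^2 + b^2)) \<le> g^2 * L^2 + b^2" .
  have lm: "cmod ?lm \<le> M"
    using quad_norm[OF lam_quad(2)[of g b u k]] cu cq unfolding M_def by linarith
  have lmB: "cmod (?lm * Bq ?lp ?lm t) \<le> M * (2/m * E)"
  proof -
    have "0 \<le> M" using lm norm_ge_zero[of "lam_m g b u k"] by linarith
    then show ?thesis unfolding norm_mult by (intro mult_mono lm hB) auto
  qed
  have "cmod (Aq ?lp ?lm t) \<le> cmod (exp (?lm * complex_of_real t)) + cmod (?lm * Bq ?lp ?lm t)"
    unfolding A_alt[OF ne] by (rule norm_triangle_ineq4)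
  then show "cmod (Aq ?lp ?lm t) \<le> (1 + M*(2/m)) * E" using xm lmB by (simp add: algebra_simps)
  have "cmod (Dq ?lp ?lm t) \<le> cmod (exp (?lp * complex_of_real t)) + cmod (?lm * Bq ?lp ?lm t)"
    unfolding D_alt[OF ne] by (rule norm_triangle_ineq)
  then show "cmod (Dq ?lp ?lm t) \<le> (1 + M*(2/m)) * E" using xp lmB by (simp add: algebra_simps)
qed


lemma large_region:
  assumes g: "g > 0" and b: "b > 0" and u: "u > 0" and t: "t \<ge> 0"
    and s1: "1 \<le> norm k" and big: "4*(g^2*norm k^2 + b^2) \<le> 3/4 * u^2 * norm k^4"
  defines "Ec \<equiv> exp (-(g^2/u)*t)" and "Es \<equiv> exp (-(u*norm k^2/2)*t)" and "K \<equiv> 4*(g^2+b^2)/u^2"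
  shows "cmod (Aq (lam_p g b u k) (lam_m g b u k) t) \<le> 2*Ec + K/norm k^2 * Es"
    "cmod (Dq (lam_p g b u k) (lam_m g b u k) t) \<le> K/norm k^2 * Ec + 2*Es"
    "cmod (Bq (lam_p g b u k) (lam_m g b u k) t) \<le> 2/(u*norm k^2) * (Ec + Es)"
proof -
  define s where "s = norm k"
  define d where "d = u^2*norm k^4 - 4*(g^2*norm k^2+b^2)"
  define a where "a = u*norm k^2/2"
  define q where "q = g^2*norm k^2+b^2"
  define r where "r = sqrt d"
  have s0: "s > 0" using s1 unfolding s_def by linarith
  have a0: "a > 0" using u s0 by (simp add: a_def s_def)
  have q0: "q \<ge> 0" by (simp add: q_def)
  have a2: "a^2 = u^2 * norm k^4 / 4" by (simp add: a_def power_mult_distrib power_divide eval_nat_numeral)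
  have deq: "d = 4*a^2 - 4*q" by (simp add: d_def a2 q_def)
  have ad: "a^2 \<le> d" using big unfolding deq a2 q_def by linarith
  have d0: "0 \<le> d" using ad by (smt (verit) zero_le_power2)
  have r0: "r \<ge> 0" using d0 by (simp add: r_def)
  have r2: "r^2 = d" using d0 by (simp add: r_def)
  have rr: "r^2 = 4*a^2 - 4*q" using r2 deq by simp
  have ar: "a \<le> r" unfolding r_def using ad by (rule real_le_rsqrt)
  note RF = root_facts[OF a0 q0 r0 rr]
  have "(g^2/u) * (2*a) = g^2 * norm k^2" using u by (simp add: a_def field_simps)
  also have "\<dots> \<le> q" by (simp add: q_def)
  finally have "(g^2/u) * (2*a) \<le> (a - r/2) * (2*a)" using RF(2) by linarith
  then have G: "g^2/u \<le> a - r/2" by (rule mult_right_le_imp_le) (use a0 in simp)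
  have P: "lam_p g b u k = complex_of_real (-a + r/2)" "lam_m g b u k = complex_of_real (-a - r/2)"
    using lam_pos[of u k g b] d0 by (simp_all add: a_def r_def d_def)
  have w: "a \<le> cmod (lam_p g b u k - lam_m g b u k)"
  proof -
    have "lam_p g b u k - lam_m g b u k = complex_of_real r" unfolding P by (simp flip: of_real_diff)
    then show ?thesis using ar r0 by simp
  qed
  have lp: "cmod (lam_p g b u k) \<le> q/a" using RF(3,4) unfolding P norm_of_real by linarith
  have lm: "cmod (lam_m g b u k) \<le> 2*a" using RF(1) r0 a0 unfolding P norm_of_real by linarith
  have ep: "cmod (exp (lam_p g b u k * complex_of_real t)) \<le> Ec"
  proof -
    have "(-a + r/2) * t \<le> (-(g^2/u)) * t" using G t by (intro mult_right_mono) auto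
    then have "exp ((-a + r/2) * t) \<le> exp (-(g^2/u)*t)" by (simp only: exp_le_cancel_iff)
    then show ?thesis unfolding exp_cmod Ec_def P by simp
  qed
  have em: "cmod (exp (lam_m g b u k * complex_of_real t)) \<le> Es"
  proof -
    have "(-a - r/2) * t \<le> (-a) * t" using r0 t by (intro mult_right_mono) auto
    then have "exp ((-a - r/2) * t) \<le> exp (-a*t)" by (simp only: exp_le_cancel_iff)
    then show ?thesis unfolding exp_cmod Es_def P by (simp add: a_def)
  qed
  have Ec0: "0 \<le> Ec" "0 \<le> Es" by (simp_all add: Ec_def Es_def)
  have qa: "q/a^2 \<le> K/norm k^2"
  proof -
    have "b^2 * 1 \<le> b^2 * norm k^2" using s1 by (intro mult_left_mono) (auto simp: one_le_power)
    then have "q \<le> (g^2+b^2) * norm k^2" by (simp add: q_def algebra_simps)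
    then have "q/a^2 \<le> ((g^2+b^2) * norm k^2)/a^2" using a0 by (intro divide_right_mono) auto
    also have "\<dots> = K/norm k^2" using s0 u unfolding a2 K_def s_def by (simp add: field_simps eval_nat_numeral)
    finally show ?thesis .
  qed
  have "cmod (Aq (lam_p g b u k) (lam_m g b u k) t) \<le> (q/a*Es + 2*a*Ec)/a"
    using tri_bound[OF a0 w lp lm em ep] unfolding Aq_def .
  also have "\<dots> = q/a^2 * Es + 2*Ec" using a0 by (simp add: field_simps power2_eq_square)
  also have "\<dots> \<le> K/norm k^2 * Es + 2*Ec" using qa Ec0 by (intro add_mono mult_right_mono) auto
  finally show "cmod (Aq (lam_p g b u k) (lam_m g b u k) t) \<le> 2*Ec + K/norm k^2 * Es" by simp
  have "cmod (Dq (lam_p g b u k) (lam_m g b u k) t) \<le> (q/a*Ec + 2*a*Es)/a"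
    using tri_bound[OF a0 w lp lm ep em] unfolding Dq_def .
  also have "\<dots> = q/a^2 * Ec + 2*Es" using a0 by (simp add: field_simps power2_eq_square)
  also have "\<dots> \<le> K/norm k^2 * Ec + 2*Es" using qa Ec0 by (intro add_mono mult_right_mono) auto
  finally show "cmod (Dq (lam_p g b u k) (lam_m g b u k) t) \<le> K/norm k^2 * Ec + 2*Es" .
  have "cmod (Bq (lam_p g b u k) (lam_m g b u k) t) \<le> (Ec + Es)/a"
    using tri_bound2[OF a0 w ep em] unfolding Bq_def .
  also have "\<dots> = 2/(u*norm k^2) * (Ec + Es)" by (simp add: a_def)
  finally show "cmod (Bq (lam_p g b u k) (lam_m g b u k) t) \<le> 2/(u*norm k^2) * (Ec + Es)" .
qed


lemma sum_bound:
  fixes p C w e1 e2 f1 f2 :: real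
  assumes "0 \<le> p" "p \<le> C" "0 \<le> w" "0 \<le> e1" "e1 \<le> f1" "0 \<le> e2" "e2 \<le> f2"
  shows "p * (w * (e1 + e2)) \<le> C * (w * f1 + w * f2)"
proof -
  have "w * (e1 + e2) \<le> w * (f1 + f2)" using assms by (intro mult_left_mono) auto
  then have "p * (w * (e1 + e2)) \<le> C * (w * (f1 + f2))"
    using assms by (intro mult_mono) auto
  then show ?thesis by (simp add: algebra_simps)
qed

lemma le_scale:
  fixes y p x C :: real
  assumes "y \<le> p * x" "0 \<le> x" "p \<le> C"
  shows "y \<le> C * x"
  using assms by (meson order_trans mult_right_mono)

theorem proposition5p1:
  fixes \<gamma> \<beta> \<mu> :: real
  assumes "\<gamma> > 0" and "\<beta> > 0" and "\<mu> > 0"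
  shows "\<exists>\<epsilon> L C c. 0 < \<epsilon> \<and> \<epsilon> < L \<and> C > 0 \<and> c > 0 \<and>
    (\<forall>t k i j. t \<ge> 0 \<and> lam_p \<gamma> \<beta> \<mu> k \<noteq> lam_m \<gamma> \<beta> \<mu> k \<and> i < 7 \<and> j < 7 \<longrightarrow>
       (norm k \<le> \<epsilon> \<longrightarrow>
          cmod (Nmat \<gamma> \<beta> \<mu> t k i j)
            \<le> C * bpat 1 (norm k) 1 1 1 i j * exp (- (1/2) * \<mu> * norm k ^ 2 * t)) \<and>
       (L \<le> norm k \<longrightarrow>
          cmod (Nmat \<gamma> \<beta> \<mu> t k i j)
            \<le> C * (bpat 1 (1 / norm k) (1 / norm k ^ 2) (1 / norm k ^ 2) 1 i j * exp (- c * t)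
                 + bpat (1 / norm k ^ 2) (1 / norm k) 1 (1 / norm k ^ 2) (1 / norm k ^ 2) i j
                     * exp (- c * norm k ^ 2 * t))) \<and>
       (\<epsilon> \<le> norm k \<and> norm k \<le> L \<longrightarrow>
          cmod (Nmat \<gamma> \<beta> \<mu> t k i j) \<le> C * bpat 1 1 1 1 1 i j * exp (- c * t)))"
proof -
  let ?g = \<gamma> and ?b = \<beta> and ?u = \<mu>
  have g: "\<gamma> > 0" and b: "\<beta> > 0" and u: "\<mu> > 0" using assms by auto
  define \<epsilon> where "\<epsilon> = min 1 (\<beta>/\<mu>)"
  define L where "L = 2 + 4*(\<gamma>+\<beta>)/\<mu>"
  define m where "m = min (\<mu>*\<epsilon>^2/2) (\<gamma>^2/\<mu>)"
  define c where "c = min (m/2) (\<mu>/2)"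
  define M0 where "M0 = 1 + \<mu> + \<gamma>^2 + \<beta>^2"
  define M1 where "M1 = 1 + \<mu>*L^2 + \<gamma>^2*L^2 + \<beta>^2"
  define K where "K = 4*(\<gamma>^2+\<beta>^2)/\<mu>^2"
  define p1 where "p1 = 2*M0/\<beta>"
  define p2 where "p2 = 2*\<gamma>/\<beta>"
  define p3 where "p3 = 1 + M1*(2/m)"
  define p4 where "p4 = \<gamma>*L*(2/m)"
  define p5 where "p5 = \<beta>*(2/m)"
  define p6 where "p6 = K"
  define p7 where "p7 = 2*\<gamma>/\<mu>"
  define p8 where "p8 = 2*\<beta>/\<mu>"
  define C where "C = 2 + p1 + p2 + p3 + p4 + p5 + p6 + p7 + p8"
  have e0: "0 < \<epsilon>" using b u by (simp add: \<epsilon>_def)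
  have e1: "\<epsilon> \<le> 1" by (simp add: \<epsilon>_def)
  have eb: "\<epsilon> \<le> \<beta>/\<mu>" by (simp add: \<epsilon>_def)
  have L2: "2 \<le> L" using g b u by (simp add: L_def)
  have eL: "\<epsilon> < L" using e1 L2 by linarith
  have m0: "m > 0" using u g e0 by (simp add: m_def)
  have mg: "m \<le> \<gamma>^2/\<mu>" by (simp add: m_def)
  have c0: "c > 0" using m0 u by (simp add: c_def)
  have cm: "c \<le> m/2" and cu: "c \<le> \<mu>/2" by (simp_all add: c_def)
  have M00: "M0 \<ge> 0" by (simp add: M0_def u[THEN less_imp_le] add_nonneg_nonneg)
  have M10: "M1 \<ge> 0" using u by (simp add: M1_def add_nonneg_nonneg)
  have pp: "0 \<le> p1" "0 \<le> p2" "0 \<le> p3" "0 \<le> p4" "0 \<le> p5" "0 \<le> p6" "0 \<le> p7" "0 \<le> p8"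
    using g b u m0 M00 M10 L2 unfolding p1_def p2_def p3_def p4_def p5_def p6_def p7_def p8_def K_def
    by auto
  have Cge: "2 \<le> C" "p1 \<le> C" "p2 \<le> C" "p3 \<le> C" "p4 \<le> C" "p5 \<le> C" "p6 \<le> C" "p7 \<le> C" "p8 \<le> C"
    using pp unfolding C_def by linarith+
  have C0: "C > 0" using Cge by linarith
  have R0: "cmod (Nmat \<gamma> \<beta> \<mu> t k i j) \<le> C * bpat 1 (norm k) 1 1 1 i j * exp (- (1/2) * \<mu> * norm k ^ 2 * t)"
    if t: "t \<ge> 0" and i: "i < 7" and j: "j < 7" and sk: "norm k \<le> \<epsilon>" for t k i j
  proof -
    define E where "E = exp (- (1/2) * \<mu> * norm k ^ 2 * t)"
    have E0: "0 \<le> E" by (simp add: E_def)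
    have s1: "norm k \<le> 1" using sk e1 by linarith
    have "norm k \<le> \<beta>/\<mu>" using sk eb by linarith
    then have sb: "\<mu> * norm k \<le> \<beta>" using u by (simp add: field_simps)
    note SR = small_region[OF g b u t s1 sb, folded E_def M0_def]
    have hA: "cmod (Aq (lam_p \<gamma> \<beta> \<mu> k) (lam_m \<gamma> \<beta> \<mu> k) t) \<le> C * E"
      by (rule le_scale[OF _ E0, of _ p1]) (use SR(2) Cge in \<open>simp_all add: p1_def\<close>)
    have hD: "cmod (Dq (lam_p \<gamma> \<beta> \<mu> k) (lam_m \<gamma> \<beta> \<mu> k) t) \<le> C * E"
      by (rule le_scale[OF _ E0, of _ p1]) (use SR(3) Cge in \<open>simp_all add: p1_def\<close>)
    have h01: "\<gamma> * norm k * cmod (Bq (lam_p \<gamma> \<beta> \<mu> k) (lam_m \<gamma> \<beta> \<mu> k) t) \<le> C * (norm k * E)"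
    proof (rule le_scale[of _ p2])
      have "\<gamma> * norm k * cmod (Bq (lam_p \<gamma> \<beta> \<mu> k) (lam_m \<gamma> \<beta> \<mu> k) t) \<le> \<gamma> * norm k * (2/\<beta>*E)"
        using SR(1) g by (intro mult_left_mono) auto
      also have "\<dots> = p2 * (norm k * E)" by (simp add: p2_def)
      finally show "\<gamma> * norm k * cmod (Bq (lam_p \<gamma> \<beta> \<mu> k) (lam_m \<gamma> \<beta> \<mu> k) t) \<le> p2 * (norm k * E)" .
    qed (use E0 Cge in auto)
    have h12: "\<beta> * cmod (Bq (lam_p \<gamma> \<beta> \<mu> k) (lam_m \<gamma> \<beta> \<mu> k) t) \<le> C * E"
    proof (rule le_scale[of _ 2])
      have "\<beta> * cmod (Bq (lam_p \<gamma> \<beta> \<mu> k) (lam_m \<gamma> \<beta> \<mu> k) t) \<le> \<beta> * (2/\<beta>*E)"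
        using SR(1) b by (intro mult_left_mono) auto
      also have "\<dots> = 2 * E" using b by simp
      finally show "\<beta> * cmod (Bq (lam_p \<gamma> \<beta> \<mu> k) (lam_m \<gamma> \<beta> \<mu> k) t) \<le> 2 * E" .
    qed (use E0 Cge in auto)
    have "cmod (Nmat \<gamma> \<beta> \<mu> t k i j) \<le> bpat (C*E) (C*(norm k*E)) (C*E) (C*E) (C*E) i j"
      by (rule nmat_bound[OF g b i j hA hA h01 hD h12])
    also have "\<dots> = C * bpat 1 (norm k) 1 1 1 i j * E"
      using bpat_lin1[of C 1 "norm k" 1 1 1 i j E] by (simp add: mult.assoc)
    finally show ?thesis unfolding E_def .
  qed
  have R1: "cmod (Nmat \<gamma> \<beta> \<mu> t k i j) \<le> C * bpat 1 1 1 1 1 i j * exp (- c * t)"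
    if t: "t \<ge> 0" and ne: "lam_p \<gamma> \<beta> \<mu> k \<noteq> lam_m \<gamma> \<beta> \<mu> k" and i: "i < 7" and j: "j < 7"
      and sk1: "\<epsilon> \<le> norm k" and sk2: "norm k \<le> L" for t k i j
  proof -
    define F where "F = exp (- c * t)"
    define E1 where "E1 = exp (-(m/2)*t)"
    have F0: "0 \<le> F" by (simp add: F_def)
    have E10: "0 \<le> E1" by (simp add: E1_def)
    have "- (m/2) * t \<le> - c * t" using cm t by (intro mult_right_mono) auto
    then have EF: "E1 \<le> F" unfolding E1_def F_def by (simp only: exp_le_cancel_iff)
    note MR = middle_region[OF g b u t ne e0 sk1 sk2 m_def, folded E1_def M1_def]
    have B0: "0 \<le> cmod (Bq (lam_p \<gamma> \<beta> \<mu> k) (lam_m \<gamma> \<beta> \<mu> k) t)" by simp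
    have hA: "cmod (Aq (lam_p \<gamma> \<beta> \<mu> k) (lam_m \<gamma> \<beta> \<mu> k) t) \<le> C * F"
    proof -
      have "p3 * E1 \<le> C * F" using Cge pp(3) EF E10 C0 by (intro mult_mono) auto
      then show ?thesis using MR(2) unfolding p3_def by linarith
    qed
    have hD: "cmod (Dq (lam_p \<gamma> \<beta> \<mu> k) (lam_m \<gamma> \<beta> \<mu> k) t) \<le> C * F"
    proof -
      have "p3 * E1 \<le> C * F" using Cge pp(3) EF E10 C0 by (intro mult_mono) auto
      then show ?thesis using MR(3) unfolding p3_def by linarith
    qed
    have h01: "\<gamma> * norm k * cmod (Bq (lam_p \<gamma> \<beta> \<mu> k) (lam_m \<gamma> \<beta> \<mu> k) t) \<le> C * F"
    proof -
      have "\<gamma> * norm k * cmod (Bq (lam_p \<gamma> \<beta> \<mu> k) (lam_m \<gamma> \<beta> \<mu> k) t) \<le> \<gamma> * L * (2/m * E1)"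
        using MR(1) g sk2 B0 L2 by (intro mult_mono) auto
      also have "\<dots> = p4 * E1" by (simp add: p4_def)
      also have "\<dots> \<le> C * F" using Cge pp(4) EF E10 C0 by (intro mult_mono) auto
      finally show ?thesis .
    qed
    have h12: "\<beta> * cmod (Bq (lam_p \<gamma> \<beta> \<mu> k) (lam_m \<gamma> \<beta> \<mu> k) t) \<le> C * F"
    proof -
      have "\<beta> * cmod (Bq (lam_p \<gamma> \<beta> \<mu> k) (lam_m \<gamma> \<beta> \<mu> k) t) \<le> \<beta> * (2/m * E1)"
        using MR(1) b by (intro mult_left_mono) auto
      also have "\<dots> = p5 * E1" by (simp add: p5_def)
      also have "\<dots> \<le> C * F" using Cge pp(5) EF E10 C0 by (intro mult_mono) auto
      finally show ?thesis .
    qed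
    have "cmod (Nmat \<gamma> \<beta> \<mu> t k i j) \<le> bpat (C*F) (C*F) (C*F) (C*F) (C*F) i j"
      by (rule nmat_bound[OF g b i j hA hA h01 hD h12])
    also have "\<dots> = C * bpat 1 1 1 1 1 i j * F"
      using bpat_lin1[of C 1 1 1 1 1 i j F] by simp
    finally show ?thesis unfolding F_def .
  qed
  have R2: "cmod (Nmat \<gamma> \<beta> \<mu> t k i j)
            \<le> C * (bpat 1 (1 / norm k) (1 / norm k ^ 2) (1 / norm k ^ 2) 1 i j * exp (- c * t)
                 + bpat (1 / norm k ^ 2) (1 / norm k) 1 (1 / norm k ^ 2) (1 / norm k ^ 2) i j
                     * exp (- c * norm k ^ 2 * t))"
    if t: "t \<ge> 0" and i: "i < 7" and j: "j < 7" and sk: "L \<le> norm k" for t k i j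
  proof -
    define s where "s = norm k"
    define F1 where "F1 = exp (- c * t)"
    define F2 where "F2 = exp (- c * norm k ^ 2 * t)"
    define Ec where "Ec = exp (-(\<gamma>^2/\<mu>)*t)"
    define Es where "Es = exp (-(\<mu>*norm k^2/2)*t)"
    have s1: "1 \<le> norm k" using sk L2 by linarith
    have sp: "0 < s" using s1 unfolding s_def by linarith
    have ss: "1 \<le> s^2" using s1 by (simp add: s_def one_le_power)
    have big: "4*(\<gamma>^2*norm k^2 + \<beta>^2) \<le> 3/4 * \<mu>^2 * norm k^4"
    proof -
      have "4*(\<gamma>+\<beta>)/\<mu> \<le> s" using sk g b u unfolding L_def s_def by simp
      then have h1: "4*(\<gamma>+\<beta>) \<le> \<mu> * s" using u by (simp add: pos_divide_le_eq mult.commute)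
      have "(4*(\<gamma>+\<beta>))^2 \<le> (\<mu> * s)^2" using h1 g b by (intro power_mono) auto
      moreover have "(4*(\<gamma>+\<beta>))^2 = 16*(\<gamma>^2+\<beta>^2) + 32*\<gamma>*\<beta>" by (simp add: power2_eq_square algebra_simps)
      moreover have "(\<mu> * s)^2 = \<mu>^2 * s^2" by (simp add: power_mult_distrib)
      moreover have "0 \<le> \<gamma>*\<beta>" using g b by simp
      ultimately have h2: "16*(\<gamma>^2+\<beta>^2) \<le> \<mu>^2 * s^2" by linarith
      have "16*(\<gamma>^2+\<beta>^2) * s^2 \<le> \<mu>^2 * s^2 * s^2" using h2 by (rule mult_right_mono) simp
      moreover have "\<mu>^2 * s^2 * s^2 = \<mu>^2 * norm k^4" by (simp add: s_def power4_eq_xxxx power2_eq_square algebra_simps)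
      moreover have "\<beta>^2 * 1 \<le> \<beta>^2 * s^2" using ss by (intro mult_left_mono) auto
      moreover have "0 \<le> \<mu>^2 * norm k^4" by simp
      moreover have "16*(\<gamma>^2+\<beta>^2) * s^2 = 16*(\<gamma>^2 * s^2) + 16*(\<beta>^2 * s^2)" by (simp add: algebra_simps)
      moreover have "4*(\<gamma>^2*norm k^2 + \<beta>^2) = 4*(\<gamma>^2 * s^2) + 4*\<beta>^2" by (simp add: s_def)
      moreover have "0 \<le> \<gamma>^2 * s^2" by simp
      ultimately show ?thesis by linarith
    qed
    note LR = large_region[OF g b u t s1 big, folded Ec_def Es_def K_def]
    have F10: "0 \<le> Ec" "0 \<le> Es" by (simp_all add: Ec_def Es_def)
    have "- (\<gamma>^2/\<mu>) * t \<le> - c * t" using cm mg m0 t by (intro mult_right_mono) auto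
    then have EF1: "Ec \<le> F1" unfolding Ec_def F1_def by (simp only: exp_le_cancel_iff)
    have "c * (norm k^2 * t) \<le> (\<mu>/2) * (norm k^2 * t)" using cu t by (intro mult_right_mono) auto
    then have "-(\<mu>*norm k^2/2)*t \<le> - c * norm k ^ 2 * t" by (simp add: algebra_simps)
    then have EF2: "Es \<le> F2" unfolding Es_def F2_def by (simp only: exp_le_cancel_iff)
    have w1: "0 \<le> 1 / norm k" and w2: "0 \<le> 1 / norm k ^ 2" by simp_all
    have hA: "cmod (Aq (lam_p \<gamma> \<beta> \<mu> k) (lam_m \<gamma> \<beta> \<mu> k) t) \<le> C * (1 * F1 + 1 / norm k ^ 2 * F2)"
    proof -
      have "2*Ec \<le> C*F1" using Cge EF1 F10 C0 by (intro mult_mono) auto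
      moreover have "K/norm k^2 * Es \<le> C * (1 / norm k ^ 2 * F2)"
      proof -
        have q1: "1 / norm k ^ 2 * Es \<le> 1 / norm k ^ 2 * F2" using EF2 w2 by (rule mult_left_mono)
        have "K * (1 / norm k ^ 2 * Es) \<le> C * (1 / norm k ^ 2 * F2)"
          by (rule mult_mono[OF _ q1]) (use Cge C0 F10 w2 p6_def in auto)
        then show ?thesis by simp
      qed
      ultimately show ?thesis using LR(1) by (simp add: algebra_simps)
    qed
    have hD: "cmod (Dq (lam_p \<gamma> \<beta> \<mu> k) (lam_m \<gamma> \<beta> \<mu> k) t) \<le> C * (1 / norm k ^ 2 * F1 + 1 * F2)"
    proof -
      have "2*Es \<le> C*F2" using Cge EF2 F10 C0 by (intro mult_mono) auto
      moreover have "K/norm k^2 * Ec \<le> C * (1 / norm k ^ 2 * F1)"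
      proof -
        have q1: "1 / norm k ^ 2 * Ec \<le> 1 / norm k ^ 2 * F1" using EF1 w2 by (rule mult_left_mono)
        have "K * (1 / norm k ^ 2 * Ec) \<le> C * (1 / norm k ^ 2 * F1)"
          by (rule mult_mono[OF _ q1]) (use Cge C0 F10 w2 p6_def in auto)
        then show ?thesis by simp
      qed
      ultimately show ?thesis using LR(2) by (simp add: algebra_simps)
    qed
    have B0: "0 \<le> cmod (Bq (lam_p \<gamma> \<beta> \<mu> k) (lam_m \<gamma> \<beta> \<mu> k) t)" by simp
    have h01: "\<gamma> * norm k * cmod (Bq (lam_p \<gamma> \<beta> \<mu> k) (lam_m \<gamma> \<beta> \<mu> k) t) \<le> C * (1 / norm k * F1 + 1 / norm k * F2)"
    proof -
      have "\<gamma> * norm k * cmod (Bq (lam_p \<gamma> \<beta> \<mu> k) (lam_m \<gamma> \<beta> \<mu> k) t) \<le> \<gamma> * norm k * (2/(\<mu>*norm k^2) * (Ec + Es))"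
        using LR(3) g by (intro mult_left_mono) auto
      also have "\<dots> = p7 * (1 / norm k * (Ec + Es))" using sp u unfolding p7_def s_def
        by (simp add: field_simps power2_eq_square)
      also have "\<dots> \<le> C * (1 / norm k * F1 + 1 / norm k * F2)"
        by (rule sum_bound) (use pp Cge EF1 EF2 F10 w1 in auto)
      finally show ?thesis .
    qed
    have h12: "\<beta> * cmod (Bq (lam_p \<gamma> \<beta> \<mu> k) (lam_m \<gamma> \<beta> \<mu> k) t) \<le> C * (1 / norm k ^ 2 * F1 + 1 / norm k ^ 2 * F2)"
    proof -
      have "\<beta> * cmod (Bq (lam_p \<gamma> \<beta> \<mu> k) (lam_m \<gamma> \<beta> \<mu> k) t) \<le> \<beta> * (2/(\<mu>*norm k^2) * (Ec + Es))"
        using LR(3) b by (intro mult_left_mono) auto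
      also have "\<dots> = p8 * (1 / norm k ^ 2 * (Ec + Es))" using sp u unfolding p8_def s_def
        by (simp add: field_simps)
      also have "\<dots> \<le> C * (1 / norm k ^ 2 * F1 + 1 / norm k ^ 2 * F2)"
        by (rule sum_bound) (use pp Cge EF1 EF2 F10 w2 in auto)
      finally show ?thesis .
    qed
    have "cmod (Nmat \<gamma> \<beta> \<mu> t k i j) \<le> bpat (C * (1 * F1 + 1 / norm k ^ 2 * F2)) (C * (1 / norm k * F1 + 1 / norm k * F2))
        (C * (1 / norm k ^ 2 * F1 + 1 * F2)) (C * (1 / norm k ^ 2 * F1 + 1 / norm k ^ 2 * F2)) (C * (1 * F1 + 1 / norm k ^ 2 * F2)) i j"
      by (rule nmat_bound[OF g b i j hA hA h01 hD h12])
    also have "\<dots> = C * (bpat 1 (1 / norm k) (1 / norm k ^ 2) (1 / norm k ^ 2) 1 i j * F1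
                 + bpat (1 / norm k ^ 2) (1 / norm k) 1 (1 / norm k ^ 2) (1 / norm k ^ 2) i j * F2)"
      by (rule bpat_lin2[symmetric])
    finally show ?thesis unfolding F1_def F2_def .
  qed
  show ?thesis
    apply (rule exI[where x = \<epsilon>], rule exI[where x = L], rule exI[where x = C], rule exI[where x = c])
    using e0 eL C0 c0 R0 R1 R2 by blast
qed

end
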